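(* $\mathfrak{L}(\mathbf{H})^w_{O(n)} \subsetneq \mathfrak{L}(SL(3,\mathbb{Z}))^w_{O(n)}$.
   Context: For a group $G$ with identity $e$, a $G$-automaton is a tuple $(Q,\Sigma,G,\delta,q_0,Q_a)$ where $Q$ is a finite set of states, $\Sigma$ a finite input alphabet, $q_0\in Q$ the initial state, $Q_a\subseteq Q$ the accepting states, and $\delta$ assigns to each $(q,\sigma)\in Q\times(\Sigma\cup\{\varepsilon\})$ a finite set of pairs $(q',m)\in Q\times G$. The register holds an element of $G$, initially $e$; using a transition $(q',m)\in\delta(q,\sigma)$ (one step) the automaton reads $\sigma$ (or nothing), moves to $q'$ and replaces the register content $x$ by $xm$. A word is accepted if some computation reads it entirely and ends in an accepting state with register equal to $e$. A $G$-automaton recognizing $\mathtt{L}$ is weakly $t(n)$ time-bounded if every $x\in\mathtt{L}$ with $|x|=n$ has an accepting computation of at most $t(n)$ steps; $\mathfrak{L}(G)^w_{O(n)}$ is the class of languages recognized by weakly $t(n)$ time-bounded $G$-automata for some $t(n)=O(n)$. $\mathbf{H}$ is the discrete Heisenberg group of $3\times3$ upper unitriangular integer matrices (presentation $\langle a,b\mid ab=bac, ac=ca, bc=cb\rangle$, $c=a^{-1}b^{-1}ab$); $SL(3,\mathbb{Z})$ is the group of $3\times3$ integer matrices of determinant $1$. *)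

theory Defs
  imports "HOL-Analysis.Determinants" "HOL-Algebra.Group" "HOL-Library.Landau_Symbols"
begin

section \<open>G-automata\<close>

text \<open>A G-automaton is a tuple (Q, Sigma, G, delta, q0, Qa).  States are natural numbers
(Q a finite set of them), input symbols are of type 'a (Sigma a finite set of them),
and delta q None are the epsilon-transitions, delta q (Some s) the transitions reading s.\<close>

definition is_G_automaton ::
  "('g, 'b) monoid_scheme \<Rightarrow> nat set \<Rightarrow> 'a set \<Rightarrow> (nat \<Rightarrow> 'a option \<Rightarrow> (nat \<times> 'g) set)
   \<Rightarrow> nat \<Rightarrow> nat set \<Rightarrow> bool" where
  "is_G_automaton G Q \<Sigma> \<delta> q0 Qa \<longleftrightarrow>
     finite Q \<and> finite \<Sigma> \<and> q0 \<in> Q \<and> Qa \<subseteq> Q \<and>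
     (\<forall>q s. finite (\<delta> q s) \<and> \<delta> q s \<subseteq> Q \<times> carrier G) \<and>
     (\<forall>q s. (q \<notin> Q \<or> s \<notin> insert None (Some ` \<Sigma>)) \<longrightarrow> \<delta> q s = {})"

text \<open>comp G delta q x w k q' y: starting in state q with register content x, the automaton
can read the word w entirely in exactly k steps, ending in state q' with register content y.
A step using (q', m) replaces the register content x by x * m.\<close>

inductive comp ::
  "('g, 'b) monoid_scheme \<Rightarrow> (nat \<Rightarrow> 'a option \<Rightarrow> (nat \<times> 'g) set)
   \<Rightarrow> nat \<Rightarrow> 'g \<Rightarrow> 'a list \<Rightarrow> nat \<Rightarrow> nat \<Rightarrow> 'g \<Rightarrow> bool"
  for G \<delta> where
  comp_nil: "comp G \<delta> q x [] 0 q x"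
| comp_eps: "(q', m) \<in> \<delta> q None \<Longrightarrow> comp G \<delta> q' (x \<otimes>\<^bsub>G\<^esub> m) w k q'' y
             \<Longrightarrow> comp G \<delta> q x w (Suc k) q'' y"
| comp_read: "(q', m) \<in> \<delta> q (Some s) \<Longrightarrow> comp G \<delta> q' (x \<otimes>\<^bsub>G\<^esub> m) w k q'' y
             \<Longrightarrow> comp G \<delta> q x (s # w) (Suc k) q'' y"

text \<open>An accepting computation of w with k steps.\<close>
definition accepts_in ::
  "('g, 'b) monoid_scheme \<Rightarrow> (nat \<Rightarrow> 'a option \<Rightarrow> (nat \<times> 'g) set) \<Rightarrow> nat \<Rightarrow> nat set
   \<Rightarrow> 'a list \<Rightarrow> nat \<Rightarrow> bool" where
  "accepts_in G \<delta> q0 Qa w k \<longleftrightarrow>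
     (\<exists>qf. qf \<in> Qa \<and> comp G \<delta> q0 \<one>\<^bsub>G\<^esub> w k qf \<one>\<^bsub>G\<^esub>)"

definition G_lang ::
  "('g, 'b) monoid_scheme \<Rightarrow> (nat \<Rightarrow> 'a option \<Rightarrow> (nat \<times> 'g) set) \<Rightarrow> nat \<Rightarrow> nat set
   \<Rightarrow> 'a list set" where
  "G_lang G \<delta> q0 Qa = {w. \<exists>k. accepts_in G \<delta> q0 Qa w k}"

definition weakly_time_bounded ::
  "('g, 'b) monoid_scheme \<Rightarrow> (nat \<Rightarrow> 'a option \<Rightarrow> (nat \<times> 'g) set) \<Rightarrow> nat \<Rightarrow> nat set
   \<Rightarrow> (nat \<Rightarrow> nat) \<Rightarrow> bool" where
  "weakly_time_bounded G \<delta> q0 Qa t \<longleftrightarrow>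
     (\<forall>w \<in> G_lang G \<delta> q0 Qa. \<exists>k \<le> t (length w). accepts_in G \<delta> q0 Qa w k)"

text \<open>The class L(G)^w_{O(n)} of languages (over symbols of type 'a).\<close>
definition lin_weak_class :: "('g, 'b) monoid_scheme \<Rightarrow> 'a list set set" where
  "lin_weak_class G = {L. \<exists>Q \<Sigma> \<delta> q0 Qa t.
      is_G_automaton G Q \<Sigma> \<delta> q0 Qa \<and> L = G_lang G \<delta> q0 Qa \<and>
      (\<lambda>n. real (t n)) \<in> O(\<lambda>n. real n) \<and> weakly_time_bounded G \<delta> q0 Qa t}"

section \<open>The groups\<close>

text \<open>Discrete Heisenberg group: 3x3 upper unitriangular integer matrices.\<close>
definition Heisenberg :: "(int^3^3) monoid" where
  "Heisenberg = \<lparr> carrier = {A. \<forall>i j. (j < i \<longrightarrow> A $ i $ j = 0) \<and> (i = j \<longrightarrow> A $ i $ j = 1)},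
                 mult = (\<lambda>A B. A ** B), one = mat 1 \<rparr>"

text \<open>SL(3,Z): 3x3 integer matrices of determinant 1.\<close>
definition SL3Z :: "(int^3^3) monoid" where
  "SL3Z = \<lparr> carrier = {A. det A = 1}, mult = (\<lambda>A B. A ** B), one = mat 1 \<rparr>"

end

theory Submission
  imports Defs "HOL-Real_Asymp.Real_Asymp"
begin

lemma three0: "(3::3) = 0" by simp
lemma cases3: "(i::3) = 0 \<or> i = 1 \<or> i = 2" using exhaust_3[of i] three0 by (simp, blast)
lemma U3: "(UNIV::3 set) = {0,1,2}" using cases3 by auto
lemma ord3: "(0::3) < 1 \<and> (1::3) < 2 \<and> (0::3) < 2" by (simp add: less_bit1_def bit1.Rep_0 bit1.Rep_1 bit1.Rep_numeral)
lemma neq3: "(0::3) \<noteq> 1 \<and> (0::3) \<noteq> 2 \<and> (1::3) \<noteq> 2" using ord3 by auto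
lemma ne3: "(0::3)\<noteq>1" "(0::3)\<noteq>2" "(1::3)\<noteq>2" "(1::3)\<noteq>0" "(2::3)\<noteq>0" "(2::3)\<noteq>1"
  using neq3 by auto
lemma sum3: "sum f (UNIV::3 set) = f 0 + f 1 + f 2" unfolding U3 using neq3 by (simp add: ac_simps)
lemma prod3: "prod f (UNIV::3 set) = f 0 * f 1 * f 2" unfolding U3 using neq3 by (simp add: ac_simps)
lemma all3: "(\<forall>i::3. P i) \<longleftrightarrow> P 0 \<and> P 1 \<and> P 2"
proof
  assume "P 0 \<and> P 1 \<and> P 2" then show "\<forall>i. P i" using cases3 by metis
qed simp
lemma lt3: "(j::3) < i \<longleftrightarrow> (i = 1 \<and> j = 0) \<or> (i = 2 \<and> j = 0) \<or> (i = 2 \<and> j = 1)"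
proof -
  have f: "\<not> (1::3) < 0" "\<not> (2::3) < 0" "\<not> (2::3) < 1" "\<not> (0::3) < 0" "\<not> (1::3) < 1" "\<not> (2::3) < 2"
     "(0::3) < 1" "(0::3) < 2" "(1::3) < 2"
    using ord3 by (simp_all add: not_less less_imp_le)
  show ?thesis using cases3[of i] cases3[of j] apply (elim disjE) using f neq3 by simp_all
qed

lemma Hcar: "A \<in> carrier Heisenberg \<longleftrightarrow>
  A$0$0 = 1 \<and> A$1$1 = 1 \<and> A$2$2 = 1 \<and> A$1$0 = 0 \<and> A$2$0 = 0 \<and> A$2$1 = 0"
  unfolding Heisenberg_def partial_object.simps mem_Collect_eq all3 lt3
  using neq3 by (simp; blast)

lemma Hmul:
  assumes "A \<in> carrier Heisenberg" "B \<in> carrier Heisenberg"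
  shows "A ** B \<in> carrier Heisenberg \<and> (A**B)$0$1 = A$0$1 + B$0$1 \<and> (A**B)$1$2 = A$1$2 + B$1$2
     \<and> (A**B)$0$2 = A$0$2 + A$0$1 * B$1$2 + B$0$2"
  using assms unfolding Hcar by (simp add: matrix_matrix_mult_def sum3)

lemma Heq:
  assumes "A \<in> carrier Heisenberg" "B \<in> carrier Heisenberg"
    "A$0$1 = B$0$1" "A$1$2 = B$1$2" "A$0$2 = B$0$2"
  shows "A = B"
  using assms unfolding Hcar vec_eq_iff all3 by simp

lemma H_lower: "A \<in> carrier Heisenberg \<Longrightarrow> j < i \<Longrightarrow> A$i$j = 0"
  unfolding Hcar lt3 by auto

lemma H_SL: "carrier Heisenberg \<subseteq> carrier SL3Z"
proof
  fix A assume A: "A \<in> carrier Heisenberg"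
  have "det A = prod (\<lambda>i. A$i$i) UNIV"
    by (rule det_upperdiagonal) (rule H_lower[OF A])
  also have "\<dots> = A$0$0 * A$1$1 * A$2$2" by (rule prod3)
  also have "\<dots> = 1" using A unfolding Hcar by simp
  finally show "A \<in> carrier SL3Z" by (simp add: SL3Z_def)
qed
lemma comp_HS: "comp Heisenberg \<delta> q x w k q' y \<longleftrightarrow> comp SL3Z \<delta> q x w k q' y"
proof
  show "comp Heisenberg \<delta> q x w k q' y \<Longrightarrow> comp SL3Z \<delta> q x w k q' y"
    by (induction rule: comp.induct) (auto intro: comp.intros simp: Heisenberg_def SL3Z_def)
  show "comp SL3Z \<delta> q x w k q' y \<Longrightarrow> comp Heisenberg \<delta> q x w k q' y"
    by (induction rule: comp.induct) (auto intro: comp.intros simp: Heisenberg_def SL3Z_def)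
qed

lemma acc_HS: "accepts_in Heisenberg \<delta> q0 Qa w k = accepts_in SL3Z \<delta> q0 Qa w k"
  unfolding accepts_in_def comp_HS by (simp add: Heisenberg_def SL3Z_def)

lemma lang_HS: "G_lang Heisenberg \<delta> q0 Qa = G_lang SL3Z \<delta> q0 Qa"
  unfolding G_lang_def acc_HS ..

lemma incl: "lin_weak_class Heisenberg \<subseteq> lin_weak_class SL3Z"
proof
  fix L assume "L \<in> lin_weak_class Heisenberg"
  then obtain Q \<Sigma> \<delta> q0 Qa t where h: "is_G_automaton Heisenberg Q \<Sigma> \<delta> q0 Qa"
    "L = G_lang Heisenberg \<delta> q0 Qa" "(\<lambda>n. real (t n)) \<in> O(\<lambda>n. real n)"
    "weakly_time_bounded Heisenberg \<delta> q0 Qa t" unfolding lin_weak_class_def by blast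
  have "is_G_automaton SL3Z Q \<Sigma> \<delta> q0 Qa" using h(1) H_SL unfolding is_G_automaton_def by blast
  moreover have "weakly_time_bounded SL3Z \<delta> q0 Qa t"
    using h(4) unfolding weakly_time_bounded_def lang_HS acc_HS .
  ultimately show "L \<in> lin_weak_class SL3Z" unfolding lin_weak_class_def
    using h(2,3) lang_HS by blast
qed



definition XA :: "int^3^3" where "XA = (\<chi> i j. if i = j then 1 else if i = 0 \<and> j = 1 then 1 else 0)"
definition XB :: "int^3^3" where "XB = (\<chi> i j. if i = j then 1 else if i = 1 \<and> j = 0 then 1 else 0)"
definition XAi :: "int^3^3" where "XAi = (\<chi> i j. if i = j then 1 else if i = 0 \<and> j = 1 then -1 else 0)"
definition XBi :: "int^3^3" where "XBi = (\<chi> i j. if i = j then 1 else if i = 1 \<and> j = 0 then -1 else 0)"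

definition X :: "nat \<Rightarrow> int^3^3" where "X a = (if a = 0 then XA else XB)"
definition Xi :: "nat \<Rightarrow> int^3^3" where "Xi a = (if a = 0 then XAi else XBi)"

lemma X_Xi: "X a ** Xi a = mat 1" "Xi a ** X a = mat 1"
  unfolding X_def Xi_def XA_def XB_def XAi_def XBi_def
  by (auto simp: vec_eq_iff matrix_matrix_mult_def sum3 mat_def all3 ne3)

lemma det_X: "det (X a) = 1" "det (Xi a) = 1"
  unfolding X_def Xi_def XA_def XB_def XAi_def XBi_def det_3 three0
  by (auto simp: ne3)

fun W :: "nat list \<Rightarrow> int^3^3" where
  "W [] = mat 1" | "W (a # u) = X a ** W u"
fun Wi :: "nat list \<Rightarrow> int^3^3" where
  "Wi [] = mat 1" | "Wi (a # u) = Xi a ** Wi u"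

lemma W_app: "W (u @ v) = W u ** W v"
  by (induction u) (auto simp: matrix_mul_assoc)
lemma Wi_app: "Wi (u @ v) = Wi u ** Wi v"
  by (induction u) (auto simp: matrix_mul_assoc)

lemma W_Wi_rev: "W u ** Wi (rev u) = mat 1"
proof (induction u)
  case (Cons a u)
  have "W (a # u) ** Wi (rev (a # u)) = X a ** (W u ** Wi (rev u)) ** Xi a"
    by (simp add: Wi_app matrix_mul_assoc)
  then show ?case using Cons by (simp add: X_Xi)
qed simp

lemma Wi_W_rev: "Wi v ** W (rev v) = mat 1"
proof (induction v)
  case (Cons a v)
  have "Wi (a # v) ** W (rev (a # v)) = Xi a ** (Wi v ** W (rev v)) ** X a"
    by (simp add: W_app matrix_mul_assoc)
  then show ?case using Cons by (simp add: X_Xi)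
qed simp

definition inv2 :: "int^3^3 \<Rightarrow> bool" where
  "inv2 P \<longleftrightarrow> P$0$2 = 0 \<and> P$1$2 = 0 \<and> P$2$0 = 0 \<and> P$2$1 = 0 \<and> P$2$2 = 1 \<and>
     P$0$0 \<ge> 0 \<and> P$0$1 \<ge> 0 \<and> P$1$0 \<ge> 0 \<and> P$1$1 \<ge> 0 \<and> P$0$0 * P$1$1 - P$0$1 * P$1$0 = 1"

definition rs0 :: "int^3^3 \<Rightarrow> int" where "rs0 P = P$0$0 + P$0$1"
definition rs1 :: "int^3^3 \<Rightarrow> int" where "rs1 P = P$1$0 + P$1$1"

lemma XA_mul: "(XA ** P) $ i $ j = (if i = 0 then P$0$j + P$1$j else P$i$j)"
  using cases3[of i] unfolding XA_def
  by (auto simp: matrix_matrix_mult_def sum3 ne3)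
lemma XB_mul: "(XB ** P) $ i $ j = (if i = 1 then P$0$j + P$1$j else P$i$j)"
  using cases3[of i] unfolding XB_def
  by (auto simp: matrix_matrix_mult_def sum3 ne3)

lemma inv2_rs: "inv2 P \<Longrightarrow> rs0 P \<ge> 1 \<and> rs1 P \<ge> 1"
proof -
  assume "inv2 P"
  then have h: "P$0$0 \<ge> 0" "P$0$1 \<ge> 0" "P$1$0 \<ge> 0" "P$1$1 \<ge> 0" "P$0$0 * P$1$1 - P$0$1 * P$1$0 = 1"
    unfolding inv2_def by auto
  have "P$0$0 + P$0$1 \<ge> 1"
  proof (rule ccontr)
    assume "\<not> ?thesis" then have "P$0$0 = 0" "P$0$1 = 0" using h by auto
    then show False using h(5) by simp
  qed
  moreover have "P$1$0 + P$1$1 \<ge> 1"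
  proof (rule ccontr)
    assume "\<not> ?thesis" then have "P$1$0 = 0" "P$1$1 = 0" using h by auto
    then show False using h(5) by simp
  qed
  ultimately show ?thesis unfolding rs0_def rs1_def by simp
qed

lemma inv2_step:
  assumes "inv2 P" "a \<in> {0,1}"
  shows "inv2 (X a ** P) \<and> (a = 0 \<longrightarrow> rs0 (X a ** P) = rs0 P + rs1 P \<and> rs1 (X a ** P) = rs1 P)
     \<and> (a = 1 \<longrightarrow> rs1 (X a ** P) = rs0 P + rs1 P \<and> rs0 (X a ** P) = rs0 P)"
  using assms unfolding X_def inv2_def rs0_def rs1_def
  by (auto simp: XA_mul XB_mul ne3 algebra_simps)

lemma inv2_W: "set u \<subseteq> {0,1} \<Longrightarrow> inv2 (W u)"
proof (induction u)
  case Nil then show ?case by (simp add: inv2_def mat_def ne3)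
next
  case (Cons a u) then show ?case using inv2_step[of "W u" a] by simp
qed

lemma W_inj: "set u \<subseteq> {0,1} \<Longrightarrow> set u' \<subseteq> {0,1} \<Longrightarrow> W u = W u' \<Longrightarrow> u = u'"
proof (induction u arbitrary: u')
  case Nil
  show ?case
  proof (cases u')
    case (Cons a v)
    have iv: "inv2 (W v)" using Nil Cons inv2_W by simp
    have "rs0 (W []) = 1" "rs1 (W []) = 1" by (simp_all add: rs0_def rs1_def mat_def ne3)
    then show ?thesis using Nil Cons inv2_step[OF iv, of a] inv2_rs[OF iv] by auto
  qed simp
next
  case (Cons a u)
  have iv: "inv2 (W u)" using Cons inv2_W by simp
  note prems = Cons.prems and IH = Cons.IH
  show ?case
  proof (cases u')
    case Nil
    have "rs0 (W []) = 1" "rs1 (W []) = 1" by (simp_all add: rs0_def rs1_def mat_def ne3)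
    then show ?thesis using Cons Nil inv2_step[OF iv, of a] inv2_rs[OF iv] by auto
  next
    case Cons2: (Cons b v)
    have iv2: "inv2 (W v)" using prems Cons2 inv2_W by simp
    have ab: "a = b"
      using prems Cons2 inv2_step[OF iv, of a] inv2_rs[OF iv] inv2_step[OF iv2, of b] inv2_rs[OF iv2]
      by auto
    have "W u = Xi a ** (X a ** W u)" by (simp add: matrix_mul_assoc X_Xi)
    also have "\<dots> = Xi a ** (X a ** W v)" using prems Cons2 ab by simp
    also have "\<dots> = W v" by (simp add: matrix_mul_assoc X_Xi)
    finally show ?thesis using IH prems Cons2 ab by simp
  qed
qed

lemma W_Wi_eq: "set u \<subseteq> {0,1} \<Longrightarrow> set v \<subseteq> {0,1} \<Longrightarrow> W u ** Wi v = mat 1 \<Longrightarrow> v = rev u"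
proof -
  assume a: "set u \<subseteq> {0,1}" "set v \<subseteq> {0,1}" "W u ** Wi v = mat 1"
  have "W u = (W u ** Wi v) ** W (rev v)" using Wi_W_rev[of v] by (simp add: matrix_mul_assoc[symmetric])
  also have "\<dots> = W (rev v)" using a by simp
  finally have "u = rev v" using W_inj a by simp
  then show ?thesis by simp
qed



lemma comp_append:
  "comp G \<delta> q x u k1 q' x' \<Longrightarrow> comp G \<delta> q' x' z k2 q'' y \<Longrightarrow> comp G \<delta> q x (u @ z) (k1 + k2) q'' y"
  by (induction rule: comp.induct) (auto intro: comp.intros)

lemma comp_split:
  "comp G \<delta> q x w k q'' y \<Longrightarrow> w = u @ z \<Longrightarrow>
   \<exists>k1 k2 q' x'. comp G \<delta> q x u k1 q' x' \<and> comp G \<delta> q' x' z k2 q'' y \<and> k = k1 + k2"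
proof (induction arbitrary: u rule: comp.induct)
  case (comp_nil q x)
  then show ?case by (auto intro: comp.intros)
next
  case (comp_eps q' m q x w k q'' y)
  then obtain k1 k2 q1 x1 where "comp G \<delta> q' (x \<otimes>\<^bsub>G\<^esub> m) u k1 q1 x1" "comp G \<delta> q1 x1 z k2 q'' y" "k = k1 + k2"
    by blast
  then show ?case using comp_eps(1) by (metis add_Suc comp.comp_eps)
next
  case (comp_read q' m q s x w k q'' y)
  show ?case
  proof (cases u)
    case Nil
    have "comp G \<delta> q x (s # w) (Suc k) q'' y" using comp_read(1,2) by (rule comp.comp_read)
    then show ?thesis using comp_read Nil
      by (intro exI[of _ 0] exI[of _ "Suc k"] exI[of _ q] exI[of _ x]) (auto intro: comp.intros)
  next
    case (Cons a u')
    then have "w = u' @ z" "a = s" using comp_read by auto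
    then obtain k1 k2 q1 x1 where "comp G \<delta> q' (x \<otimes>\<^bsub>G\<^esub> m) u' k1 q1 x1" "comp G \<delta> q1 x1 z k2 q'' y" "k = k1 + k2"
      using comp_read by blast
    then show ?thesis using comp_read(1) Cons \<open>a = s\<close> by (metis add_Suc comp.comp_read)
  qed
qed

lemma comp_states:
  "comp G \<delta> q x w k q' y \<Longrightarrow> is_G_automaton G Q \<Sigma> \<delta> q0 Qa \<Longrightarrow> q \<in> Q \<Longrightarrow> q' \<in> Q"
  by (induction rule: comp.induct) (auto simp: is_G_automaton_def)

section \<open>The SL3Z automaton\<close>

definition dS :: "nat \<Rightarrow> nat option \<Rightarrow> (nat \<times> (int^3^3)) set" where
  "dS q s = (case s of None \<Rightarrow> {} | Some a \<Rightarrow>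
     (if q = 0 then (if a \<in> {0,1} then {(0, X a)} else if a = 2 then {(1, mat 1)} else {})
      else if q = 1 then (if a \<in> {0,1} then {(1, Xi a)} else {}) else {}))"

definition LL :: "nat list set" where "LL = {u @ 2 # rev u | u. set u \<subseteq> {0,1}}"

lemma dS_aut: "is_G_automaton SL3Z {0,1} {0,1,2} dS 0 {1}"
  unfolding is_G_automaton_def
  by (auto simp: dS_def SL3Z_def det_X split: option.splits)

lemma comp_dS_sound:
  "comp SL3Z dS q x w k q' y \<Longrightarrow>
    (q = 1 \<longrightarrow> q' = 1 \<and> set w \<subseteq> {0,1} \<and> y = x ** Wi w) \<and>
    (q = 0 \<longrightarrow> (q' = 0 \<and> set w \<subseteq> {0,1} \<and> y = x ** W w) \<or>
       (q' = 1 \<and> (\<exists>u v. w = u @ 2 # v \<and> set u \<subseteq> {0,1} \<and> set v \<subseteq> {0,1} \<and> y = x ** (W u ** Wi v))))"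
proof (induction rule: comp.induct)
  case (comp_nil q x)
  then show ?case by simp
next
  case (comp_eps q' m q x w k q'' y)
  then show ?case by (simp add: dS_def)
next
  case (comp_read q' m q s x w k q'' y)
  have mult: "x \<otimes>\<^bsub>SL3Z\<^esub> m = x ** m" by (simp add: SL3Z_def)
  show ?case
  proof (cases "q = 0")
    case True
    show ?thesis
    proof (cases "s \<in> {0,1}")
      case True
      then have "q' = 0" "m = X s" using comp_read(1) \<open>q = 0\<close> by (auto simp: dS_def)
      from comp_read(3) have IH: "(q'' = 0 \<and> set w \<subseteq> {0,1} \<and> y = (x ** m) ** W w) \<or>
       (q'' = 1 \<and> (\<exists>u v. w = u @ 2 # v \<and> set u \<subseteq> {0,1} \<and> set v \<subseteq> {0,1} \<and> y = (x ** m) ** (W u ** Wi v)))"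
        using \<open>q' = 0\<close> unfolding mult by simp
      then show ?thesis
      proof
        assume "q'' = 0 \<and> set w \<subseteq> {0,1} \<and> y = (x ** m) ** W w"
        then show ?thesis using True \<open>m = X s\<close> \<open>q = 0\<close> by (simp add: matrix_mul_assoc)
      next
        assume "q'' = 1 \<and> (\<exists>u v. w = u @ 2 # v \<and> set u \<subseteq> {0,1} \<and> set v \<subseteq> {0,1} \<and> y = (x ** m) ** (W u ** Wi v))"
        then obtain u v where "q'' = 1" "w = u @ 2 # v" "set u \<subseteq> {0,1}" "set v \<subseteq> {0,1}" "y = (x ** m) ** (W u ** Wi v)"
          by blast
        moreover have "s # w = (s # u) @ 2 # v" "set (s # u) \<subseteq> {0,1}" "y = x ** (W (s # u) ** Wi v)"
          using calculation True \<open>m = X s\<close> by (auto simp: matrix_mul_assoc)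
        ultimately have "\<exists>u v. s # w = u @ 2 # v \<and> set u \<subseteq> {0,1} \<and> set v \<subseteq> {0,1} \<and> y = x ** (W u ** Wi v)"
          by blast
        then show ?thesis using \<open>q = 0\<close> \<open>q'' = 1\<close> by simp
      qed
    next
      case False
      then have "s = 2" "q' = 1" "m = mat 1" using comp_read(1) \<open>q = 0\<close>
        by (auto simp: dS_def split: if_splits)
      then have "q'' = 1" "set w \<subseteq> {0,1}" "y = x ** Wi w" using comp_read(3) unfolding mult by auto
      then have "s # w = [] @ 2 # w \<and> set [] \<subseteq> {0::nat,1} \<and> set w \<subseteq> {0,1} \<and> y = x ** (W [] ** Wi w)"
        using \<open>s = 2\<close> by simp
      then have "\<exists>u v. s # w = u @ 2 # v \<and> set u \<subseteq> {0,1} \<and> set v \<subseteq> {0,1} \<and> y = x ** (W u ** Wi v)"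
        by blast
      then show ?thesis using \<open>q = 0\<close> \<open>q'' = 1\<close> by simp
    qed
  next
    case False
    then have "q = 1" "s \<in> {0,1}" "q' = 1" "m = Xi s" using comp_read(1)
      by (auto simp: dS_def split: if_splits)
    then show ?thesis using comp_read(3) unfolding mult by (simp add: matrix_mul_assoc)
  qed
qed

lemma comp_dS_1: "set v \<subseteq> {0,1} \<Longrightarrow> comp SL3Z dS 1 x v (length v) 1 (x ** Wi v)"
proof (induction v arbitrary: x)
  case Nil then show ?case using comp.comp_nil[of SL3Z dS 1 x] by simp
next
  case (Cons a v)
  have "(1, Xi a) \<in> dS 1 (Some a)" using Cons.prems by (simp add: dS_def)
  moreover have "comp SL3Z dS 1 (x \<otimes>\<^bsub>SL3Z\<^esub> Xi a) v (length v) 1 (x ** Wi (a # v))"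
    using Cons by (simp add: SL3Z_def matrix_mul_assoc)
  ultimately show ?case by (simp add: comp.comp_read)
qed

lemma comp_dS_0: "set u \<subseteq> {0,1} \<Longrightarrow> comp SL3Z dS 0 x u (length u) 0 (x ** W u)"
proof (induction u arbitrary: x)
  case Nil then show ?case using comp.comp_nil[of SL3Z dS 0 x] by simp
next
  case (Cons a u)
  have "(0, X a) \<in> dS 0 (Some a)" using Cons.prems by (simp add: dS_def)
  moreover have "comp SL3Z dS 0 (x \<otimes>\<^bsub>SL3Z\<^esub> X a) u (length u) 0 (x ** W (a # u))"
    using Cons by (simp add: SL3Z_def matrix_mul_assoc)
  ultimately show ?case by (simp add: comp.comp_read)
qed

lemma LL_acc: "w \<in> LL \<Longrightarrow> accepts_in SL3Z dS 0 {1} w (length w)"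
proof -
  assume "w \<in> LL"
  then obtain u where u: "w = u @ 2 # rev u" "set u \<subseteq> {0,1}" unfolding LL_def by blast
  have c1: "comp SL3Z dS 0 (mat 1) u (length u) 0 (W u)" using comp_dS_0[OF u(2), of "mat 1"] by simp
  have "comp SL3Z dS 1 (W u) (rev u) (length u) 1 (W u ** Wi (rev u))" using comp_dS_1[of "rev u" "W u"] u(2) by simp
  then have "comp SL3Z dS 1 (W u \<otimes>\<^bsub>SL3Z\<^esub> mat 1) (rev u) (length u) 1 (mat 1)"
    by (simp add: SL3Z_def W_Wi_rev)
  then have "comp SL3Z dS 0 (W u) (2 # rev u) (Suc (length u)) 1 (mat 1)"
    by (rule comp.comp_read[rotated]) (simp add: dS_def)
  from comp_append[OF c1 this] show ?thesis
    unfolding accepts_in_def u(1) by (simp add: SL3Z_def)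
qed

lemma LL_lang: "G_lang SL3Z dS 0 {1} = LL"
proof
  show "LL \<subseteq> G_lang SL3Z dS 0 {1}" using LL_acc unfolding G_lang_def by blast
  show "G_lang SL3Z dS 0 {1} \<subseteq> LL"
  proof
    fix w assume "w \<in> G_lang SL3Z dS 0 {1}"
    then obtain k where "comp SL3Z dS 0 (mat 1) w k 1 (mat 1)"
      unfolding G_lang_def accepts_in_def by (auto simp: SL3Z_def)
    from comp_dS_sound[OF this] obtain u v where uv: "w = u @ 2 # v" "set u \<subseteq> {0,1}" "set v \<subseteq> {0,1}"
      "W u ** Wi v = mat 1" by auto
    then have "v = rev u" using W_Wi_eq by blast
    then show "w \<in> LL" using uv unfolding LL_def by blast
  qed
qed

lemma LL_in: "LL \<in> lin_weak_class SL3Z"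
  unfolding lin_weak_class_def
proof (intro CollectI exI conjI)
  show "is_G_automaton SL3Z {0,1} {0,1,2} dS 0 {1}" by (rule dS_aut)
  show "LL = G_lang SL3Z dS 0 {1}" using LL_lang by simp
  show "(\<lambda>n. real ((\<lambda>n. n) n)) \<in> O(\<lambda>n. real n)" by simp
  show "weakly_time_bounded SL3Z dS 0 {1} (\<lambda>n. n)"
    unfolding weakly_time_bounded_def LL_lang using LL_acc by blast
qed



lemma step_bound:
  fixes a b c d j M :: int
  assumes "\<bar>a\<bar> \<le> j*M" "\<bar>b\<bar> \<le> M" "\<bar>c\<bar> \<le> j^2*M^2" "\<bar>d\<bar> \<le> M" "1 \<le> M" "0 \<le> j"
  shows "\<bar>c + a*b + d\<bar> \<le> (j+1)^2*M^2"
proof -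
  have "\<bar>a*b\<bar> \<le> (j*M)*M" unfolding abs_mult
    by (rule mult_mono) (use assms in auto)
  moreover have "M \<le> M*M" using assms(5) by simp
  moreover have "0 \<le> j*M*M" using assms by simp
  moreover have "(j+1)^2*M^2 = j^2*M^2 + 2*(j*M*M) + M*M" by (simp add: power2_eq_square algebra_simps)
  moreover have "\<bar>c + a*b + d\<bar> \<le> \<bar>c\<bar> + \<bar>a*b\<bar> + \<bar>d\<bar>" by (simp add: abs_triangle_ineq order_trans[OF abs_triangle_ineq])
  ultimately show ?thesis using assms by linarith
qed

lemma mat1_H: "(mat 1 :: int^3^3) \<in> carrier Heisenberg" "(mat 1 :: int^3^3)$0$1 = 0"
  "(mat 1 :: int^3^3)$1$2 = 0" "(mat 1 :: int^3^3)$0$2 = 0"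
  by (simp_all add: Hcar mat_def ne3)

lemma comp_H_bound:
  assumes gens: "\<And>q s q' g. (q',g) \<in> \<delta> q s \<Longrightarrow> g \<in> carrier Heisenberg \<and> \<bar>g$0$1\<bar> \<le> M \<and> \<bar>g$1$2\<bar> \<le> M \<and> \<bar>g$0$2\<bar> \<le> M"
    and M1: "1 \<le> M"
  shows "comp Heisenberg \<delta> q x w k q' y \<Longrightarrow> x \<in> carrier Heisenberg \<Longrightarrow> \<bar>x$0$1\<bar> \<le> int j*M \<Longrightarrow>
    \<bar>x$1$2\<bar> \<le> int j * M \<Longrightarrow> \<bar>x$0$2\<bar> \<le> (int j)^2*M^2 \<Longrightarrow>
    y \<in> carrier Heisenberg \<and> \<bar>y$0$1\<bar> \<le> int (j+k)*M \<and> \<bar>y$1$2\<bar> \<le> int (j+k)*M \<and> \<bar>y$0$2\<bar> \<le> (int (j+k))^2*M^2"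
proof (induction arbitrary: j rule: comp.induct)
  case (comp_nil q x)
  then show ?case by simp
next
  case (comp_eps q' m q x w k q'' y)
  have g: "m \<in> carrier Heisenberg" "\<bar>m$0$1\<bar> \<le> M" "\<bar>m$1$2\<bar> \<le> M" "\<bar>m$0$2\<bar> \<le> M" using gens[OF comp_eps(1)] by auto
  have mul: "x \<otimes>\<^bsub>Heisenberg\<^esub> m = x ** m" by (simp add: Heisenberg_def)
  note hm = Hmul[OF comp_eps(4) g(1)]
  have "\<bar>(x ** m)$0$2\<bar> \<le> (int j + 1)^2*M^2"
    using hm step_bound[of "x$0$1" "int j" M "m$1$2" "x$0$2" "m$0$2"] comp_eps g M1 by simp
  then have "\<bar>(x ** m)$0$2\<bar> \<le> (int (Suc j))^2*M^2" by (simp add: add.commute)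
  moreover have "\<bar>(x ** m)$0$1\<bar> \<le> int (Suc j)*M" "\<bar>(x ** m)$1$2\<bar> \<le> int (Suc j)*M"
  proof -
    have e: "int (Suc j)*M = int j*M + M" by (simp add: algebra_simps)
    have "\<bar>(x ** m)$0$1\<bar> \<le> \<bar>x$0$1\<bar> + \<bar>m$0$1\<bar>" "\<bar>(x ** m)$1$2\<bar> \<le> \<bar>x$1$2\<bar> + \<bar>m$1$2\<bar>"
      using hm abs_triangle_ineq by simp_all
    then show "\<bar>(x ** m)$0$1\<bar> \<le> int (Suc j)*M" "\<bar>(x ** m)$1$2\<bar> \<le> int (Suc j)*M"
      unfolding e using comp_eps g by linarith+
  qed
  ultimately have "y \<in> carrier Heisenberg \<and> \<bar>y$0$1\<bar> \<le> int (Suc j+k)*M \<and> \<bar>y$1$2\<bar> \<le> int (Suc j+k)*M \<and> \<bar>y$0$2\<bar> \<le> (int (Suc j+k))^2*M^2"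
    using comp_eps.IH[of "Suc j"] hm unfolding mul by blast
  then show ?case by simp
next
  case (comp_read q' m q s x w k q'' y)
  have g: "m \<in> carrier Heisenberg" "\<bar>m$0$1\<bar> \<le> M" "\<bar>m$1$2\<bar> \<le> M" "\<bar>m$0$2\<bar> \<le> M" using gens[OF comp_read(1)] by auto
  have mul: "x \<otimes>\<^bsub>Heisenberg\<^esub> m = x ** m" by (simp add: Heisenberg_def)
  note hm = Hmul[OF comp_read(4) g(1)]
  have "\<bar>(x ** m)$0$2\<bar> \<le> (int j + 1)^2*M^2"
    using hm step_bound[of "x$0$1" "int j" M "m$1$2" "x$0$2" "m$0$2"] comp_read g M1 by simp
  then have "\<bar>(x ** m)$0$2\<bar> \<le> (int (Suc j))^2*M^2" by (simp add: add.commute)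
  moreover have "\<bar>(x ** m)$0$1\<bar> \<le> int (Suc j)*M" "\<bar>(x ** m)$1$2\<bar> \<le> int (Suc j)*M"
  proof -
    have e: "int (Suc j)*M = int j*M + M" by (simp add: algebra_simps)
    have "\<bar>(x ** m)$0$1\<bar> \<le> \<bar>x$0$1\<bar> + \<bar>m$0$1\<bar>" "\<bar>(x ** m)$1$2\<bar> \<le> \<bar>x$1$2\<bar> + \<bar>m$1$2\<bar>"
      using hm abs_triangle_ineq by simp_all
    then show "\<bar>(x ** m)$0$1\<bar> \<le> int (Suc j)*M" "\<bar>(x ** m)$1$2\<bar> \<le> int (Suc j)*M"
      unfolding e using comp_read g by linarith+
  qed
  ultimately have "y \<in> carrier Heisenberg \<and> \<bar>y$0$1\<bar> \<le> int (Suc j+k)*M \<and> \<bar>y$1$2\<bar> \<le> int (Suc j+k)*M \<and> \<bar>y$0$2\<bar> \<le> (int (Suc j+k))^2*M^2"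
    using comp_read.IH[of "Suc j"] hm unfolding mul by blast
  then show ?case by simp
qed



lemma poly_exp: "\<forall>\<^sub>F m in at_top. real D * (real m+1)^6 < 2^m"
  by real_asymp

lemma arith_bound:
  fixes K C Mn m :: nat
  shows "K * (2*(C*(2*m+1)*Mn)^2+1)^3 \<le> K * (8*C^2*Mn^2+1)^3 * (m+1)^6"
proof -
  have h: "(2*m+1)^2 \<le> 4*(m+1)^2" unfolding power2_eq_square by (simp add: algebra_simps)
  have "(C*(2*m+1)*Mn)^2 = C^2*Mn^2*(2*m+1)^2" unfolding power_mult_distrib by (simp only: mult_ac)
  also have "\<dots> \<le> C^2*Mn^2*(4*(m+1)^2)" using h by (rule mult_left_mono) simp
  finally have "(C*(2*m+1)*Mn)^2 \<le> C^2*Mn^2*(4*(m+1)^2)" .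
  then have "2*(C*(2*m+1)*Mn)^2+1 \<le> 8*C^2*Mn^2*(m+1)^2 + 1" by simp
  also have "\<dots> \<le> (8*C^2*Mn^2+1)*(m+1)^2"
    by (simp add: algebra_simps)
  finally have "(2*(C*(2*m+1)*Mn)^2+1)^3 \<le> ((8*C^2*Mn^2+1)*(m+1)^2)^3"
    by (rule power_mono) simp
  also have "\<dots> = (8*C^2*Mn^2+1)^3 * (m+1)^6"
    unfolding power_mult_distrib power_mult[symmetric] by simp
  finally show ?thesis by (simp add: mult.assoc)
qed

lemma z_le_sq: "0 \<le> (z::int) \<Longrightarrow> z \<le> z^2"
  by (cases "z = 0") (auto simp: power2_eq_square)

lemma LL_notH: "LL \<notin> lin_weak_class Heisenberg"
proof
  assume "LL \<in> lin_weak_class Heisenberg"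
  then obtain Q \<Sigma> \<delta> q0 Qa t where aut: "is_G_automaton Heisenberg Q \<Sigma> \<delta> q0 Qa"
    and LLeq: "LL = G_lang Heisenberg \<delta> q0 Qa" and bo: "(\<lambda>n. real (t n)) \<in> O(\<lambda>n. real n)"
    and wtb: "weakly_time_bounded Heisenberg \<delta> q0 Qa t" unfolding lin_weak_class_def by blast
  define G0 where "G0 = (\<Union>q\<in>Q. \<Union>s\<in>insert None (Some ` \<Sigma>). snd ` \<delta> q s)"
  have fG0: "finite G0" unfolding G0_def using aut unfolding is_G_automaton_def by auto
  define M where "M = Max (insert 1 ((\<lambda>g. \<bar>g$0$1\<bar> + \<bar>g$1$2\<bar> + \<bar>g$0$2\<bar>) ` G0))"
  have M1: "1 \<le> M" unfolding M_def using fG0 by simp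
  have gens: "g \<in> carrier Heisenberg \<and> \<bar>g$0$1\<bar> \<le> M \<and> \<bar>g$1$2\<bar> \<le> M \<and> \<bar>g$0$2\<bar> \<le> M"
    if "(q',g) \<in> \<delta> q s" for q s q' g
  proof -
    have "q \<in> Q" "s \<in> insert None (Some ` \<Sigma>)" using that aut unfolding is_G_automaton_def by blast+
    then have "g \<in> G0" unfolding G0_def using that by force
    then have "\<bar>g$0$1\<bar> + \<bar>g$1$2\<bar> + \<bar>g$0$2\<bar> \<le> M" unfolding M_def using fG0 by simp
    moreover have "g \<in> carrier Heisenberg" using that aut unfolding is_G_automaton_def by blast
    ultimately show ?thesis using abs_ge_zero[of "g$0$1"] abs_ge_zero[of "g$1$2"] abs_ge_zero[of "g$0$2"]
      by (intro conjI; linarith)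
  qed
  obtain c where c: "c > 0" "\<forall>\<^sub>F n in at_top. norm (real (t n)) \<le> c * norm (real n)"
    using landau_o.bigE[OF bo] by blast
  then obtain N0 where N0: "\<And>n. n \<ge> N0 \<Longrightarrow> real (t n) \<le> c * real n"
    by (auto simp: eventually_at_top_linorder)
  define C where "C = nat \<lceil>c\<rceil>"
  have tC: "t n \<le> C * n" if "n \<ge> N0" for n
  proof -
    have "real (t n) \<le> c * real n" using N0 that by blast
    also have "\<dots> \<le> real C * real n" unfolding C_def
      by (intro mult_right_mono) (auto, linarith)
    finally show ?thesis by (simp flip: of_nat_mult)
  qed
  define Mn where "Mn = nat M"
  have MMn: "M = int Mn" unfolding Mn_def using M1 by simp
  define K where "K = card Q"
  define D where "D = K * (8*C^2*Mn^2+1)^3"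
  obtain N1 where N1: "\<And>m. m \<ge> N1 \<Longrightarrow> real D * (real m+1)^6 < 2^m"
    using poly_exp[of D] by (auto simp: eventually_at_top_linorder)
  define m where "m = max N0 N1"
  have mD: "real D * (real m+1)^6 < 2^m" using N1 unfolding m_def by simp
  have mN0: "2*m+1 \<ge> N0" unfolding m_def by simp
  define B where "B = int ((C*(2*m+1)*Mn)^2)"
  define U where "U = {u. set u \<subseteq> {0,1::nat} \<and> length u = m}"
  define R where "R u q x \<longleftrightarrow> q \<in> Q \<and> x \<in> carrier Heisenberg \<and> \<bar>x$0$1\<bar> \<le> B \<and> \<bar>x$1$2\<bar> \<le> B \<and> \<bar>x$0$2\<bar> \<le> B
     \<and> (\<exists>k1. comp Heisenberg \<delta> q0 (mat 1) u k1 q x)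
     \<and> (\<exists>k2 qf. qf \<in> Qa \<and> comp Heisenberg \<delta> q x (2 # rev u) k2 qf (mat 1))" for u q x
  have one: "\<one>\<^bsub>Heisenberg\<^esub> = mat 1" by (simp add: Heisenberg_def)
  have Rex: "\<exists>q x. R u q x" if "u \<in> U" for u
  proof -
    have uu: "set u \<subseteq> {0,1}" "length u = m" using that unfolding U_def by auto
    have "u @ 2 # rev u \<in> LL" unfolding LL_def using uu by blast
    then have "u @ 2 # rev u \<in> G_lang Heisenberg \<delta> q0 Qa" using LLeq by simp
    then have "\<exists>k \<le> t (length (u @ 2 # rev u)). accepts_in Heisenberg \<delta> q0 Qa (u @ 2 # rev u) k"
      using wtb unfolding weakly_time_bounded_def by blast
    moreover have "length (u @ 2 # rev u) = 2*m+1" using uu by simp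
    ultimately obtain k where k: "k \<le> t (2*m+1)" "accepts_in Heisenberg \<delta> q0 Qa (u @ 2 # rev u) k"
      by auto
    then obtain qf where qf: "qf \<in> Qa" "comp Heisenberg \<delta> q0 (mat 1) (u @ 2 # rev u) k qf (mat 1)"
      unfolding accepts_in_def one by blast
    from comp_split[OF qf(2) refl] obtain k1 k2 q x where
      sp: "comp Heisenberg \<delta> q0 (mat 1) u k1 q x" "comp Heisenberg \<delta> q x (2 # rev u) k2 qf (mat 1)" "k = k1 + k2"
      by blast
    have q: "q \<in> Q" using comp_states[OF sp(1) aut] aut unfolding is_G_automaton_def by blast
    have bd: "x \<in> carrier Heisenberg \<and> \<bar>x$0$1\<bar> \<le> int k1*M \<and> \<bar>x$1$2\<bar> \<le> int k1*M \<and> \<bar>x$0$2\<bar> \<le> (int k1)^2*M^2"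
      using comp_H_bound[OF gens M1 sp(1), where j=0] mat1_H by simp
    have "k1 \<le> C*(2*m+1)" using k(1) sp(3) tC[OF mN0] by simp
    then have "int k1 \<le> int (C*(2*m+1))" by (simp only: of_nat_le_iff)
    then have kb: "int k1 * M \<le> int (C*(2*m+1)) * M" using M1 by (intro mult_right_mono) auto
    have "int k1 * M \<le> (int k1 * M)^2" using M1 by (intro z_le_sq) simp
    also have "\<dots> \<le> (int (C*(2*m+1)) * M)^2" using kb M1 by (intro power_mono) auto
    also have "\<dots> = B" unfolding B_def MMn by simp
    finally have kB: "int k1 * M \<le> B" .
    have "(int k1)^2*M^2 \<le> B" using \<open>(int k1 * M)^2 \<le> _\<close> unfolding B_def MMn by (simp add: power_mult_distrib)
    then have "R u q x" unfolding R_def using q bd kB sp qf(1) by auto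
    then show ?thesis by blast
  qed
  define f where "f u = (SOME p. R u (fst p) (snd p))" for u
  have fR: "R u (fst (f u)) (snd (f u))" if "u \<in> U" for u
    unfolding f_def using Rex[OF that] someI_ex[of "\<lambda>p. R u (fst p) (snd p)"] by auto
  define g where "g u = (fst (f u), (snd (f u))$0$1, (snd (f u))$1$2, (snd (f u))$0$2)" for u
  have gim: "g ` U \<subseteq> Q \<times> {-B..B} \<times> {-B..B} \<times> {-B..B}"
  proof
    fix p assume "p \<in> g ` U"
    then obtain u where u: "u \<in> U" "p = g u" by blast
    have r: "R u (fst (f u)) (snd (f u))" using fR[OF u(1)] .
    have "\<bar>z\<bar> \<le> B \<Longrightarrow> z \<in> {-B..B}" for z by auto
    then show "p \<in> Q \<times> {-B..B} \<times> {-B..B} \<times> {-B..B}" using r unfolding u(2) g_def R_def by simp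
  qed
  have ginj: "inj_on g U"
  proof (rule inj_onI)
    fix u u' assume u: "u \<in> U" and u': "u' \<in> U" and e: "g u = g u'"
    obtain q x where qx: "f u = (q, x)" by fastforce
    obtain q' x' where qx': "f u' = (q', x')" by fastforce
    have R1: "R u q x" using fR[OF u] qx by simp
    have R2: "R u' q' x'" using fR[OF u'] qx' by simp
    have "q = q'" using e qx qx' unfolding g_def by simp
    moreover have "x = x'" using e qx qx' R1 R2 unfolding g_def R_def by (intro Heq) auto
    ultimately have R2': "R u' q x" using R2 by simp
    obtain k1 where c1: "comp Heisenberg \<delta> q0 (mat 1) u' k1 q x" using R2' unfolding R_def by blast
    obtain k2 qf where c2: "qf \<in> Qa" "comp Heisenberg \<delta> q x (2 # rev u) k2 qf (mat 1)" using R1 unfolding R_def by blast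
    have "accepts_in Heisenberg \<delta> q0 Qa (u' @ 2 # rev u) (k1 + k2)"
      unfolding accepts_in_def one using comp_append[OF c1 c2(2)] c2(1) by blast
    then have "u' @ 2 # rev u \<in> LL" unfolding LLeq G_lang_def by blast
    then obtain v where v: "set v \<subseteq> {0,1}" "u' @ 2 # rev u = v @ 2 # rev v" unfolding LL_def by blast
    have "set u' \<subseteq> {0,1}" using u' unfolding U_def by simp
    moreover have two: "(2::nat) \<notin> {0,1}" by simp
    ultimately have n1: "2 \<notin> set u'" by blast
    have "set u \<subseteq> {0,1}" using u unfolding U_def by simp
    then have n2: "2 \<notin> set (rev u)" using two by auto
    have "u' = v \<and> rev u = rev v" using append_Cons_eq_iff[OF n1 n2, of v "rev v"] v(2) by simp
    then show "u = u'" by simp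
  qed
  have fin: "finite (Q \<times> {-B..B} \<times> {-B..B} \<times> {-B..B})" using aut unfolding is_G_automaton_def by simp
  have "card U \<le> card (Q \<times> {-B..B} \<times> {-B..B} \<times> {-B..B})"
    by (rule card_inj_on_le[OF ginj gim fin])
  moreover have "card U = 2^m" unfolding U_def using card_lists_length_eq[of "{0,1::nat}" m] by (simp add: numeral_2_eq_2)
  moreover have "card (Q \<times> {-B..B} \<times> {-B..B} \<times> {-B..B}) = K * (2*(C*(2*m+1)*Mn)^2+1)^3"
  proof -
    have "B - - B + 1 = int (2*(C*(2*m+1)*Mn)^2+1)" unfolding B_def by simp
    then have cA: "card {-B..B} = 2*(C*(2*m+1)*Mn)^2+1" by (simp only: card_atLeastAtMost_int nat_int)
    have "card (Q \<times> {-B..B} \<times> {-B..B} \<times> {-B..B}) = card Q * (card {-B..B} * (card {-B..B} * card {-B..B}))"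
      by (simp only: card_cartesian_product)
    then show ?thesis unfolding K_def cA by (simp only: power3_eq_cube mult.assoc)
  qed
  ultimately have "2^m \<le> K * (2*(C*(2*m+1)*Mn)^2+1)^3" by simp
  also have "\<dots> \<le> D * (m+1)^6" unfolding D_def by (rule arith_bound)
  finally have "real (2^m) \<le> real (D * (m+1)^6)" by (simp only: of_nat_le_iff)
  then have "(2::real)^m \<le> real D * (real m + 1)^6" by (simp add: add.commute)
  then show False using mD by simp
qed


theorem theorem4p9:
  shows "(lin_weak_class Heisenberg :: 'a list set set) \<subseteq> lin_weak_class SL3Z \<and>
         (lin_weak_class Heisenberg :: nat list set set) \<subset> lin_weak_class SL3Z"
proof
  show "(lin_weak_class Heisenberg :: 'a list set set) \<subseteq> lin_weak_class SL3Z" by (rule incl)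
  show "(lin_weak_class Heisenberg :: nat list set set) \<subset> lin_weak_class SL3Z"
    using incl LL_in LL_notH by blast
qed

end
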